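(* For $n\ge 1$, let $\gamma(n)$ denote the number of partitions of $n$ having no part equal to $1$ and in which the largest part appears at least twice. Then for all $n\ge 3$, $$\gamma(n)\ \ge\ \gamma(n-2).$$
   Context: Partitions with no part equal to $1$ whose largest part occurs at least twice are called ground state non-unitary partitions; $\gamma(n)$ counts those of size $n$ (for $n\ge1$). *)

theory Defs
  imports Main "HOL-Library.Multiset"
begin

definition is_partition :: "nat multiset \<Rightarrow> nat \<Rightarrow> bool" where
  "is_partition p n \<longleftrightarrow> (\<forall>x\<in>#p. 0 < x) \<and> sum_mset p = n"

definition gsnu_partitions :: "nat \<Rightarrow> nat multiset set" where
  "gsnu_partitions n = {p. is_partition p n \<and> 1 \<notin># p \<and> p \<noteq> {#} \<and>
       count p (Max (set_mset p)) \<ge> 2}"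

definition gamma :: "nat \<Rightarrow> nat" where
  "gamma n = card (gsnu_partitions n)"

end

theory Submission
  imports Defs
begin

lemma size_le_sum_pos: "(\<forall>x\<in>#p. 0 < (x::nat)) \<Longrightarrow> size p \<le> sum_mset p"
  by (induction p) fastforce+

lemma finite_gsnu: "finite (gsnu_partitions n)"
proof -
  have "gsnu_partitions n \<subseteq> mset ` {xs. set xs \<subseteq> {..n} \<and> length xs \<le> n}"
  proof
    fix p assume "p \<in> gsnu_partitions n"
    then have pos: "\<forall>x\<in>#p. 0 < x" and s: "sum_mset p = n"
      by (auto simp: gsnu_partitions_def is_partition_def)
    obtain xs where xs: "mset xs = p" using ex_mset by blast
    have "size p \<le> n" using size_le_sum_pos[OF pos] s by simp
    moreover have "set xs \<subseteq> {..n}"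
    proof
      fix x assume "x \<in> set xs"
      then have "x \<in># p" using xs by auto
      then have "x \<le> sum_mset p" using sum_mset.remove[of x p] by simp
      then show "x \<in> {..n}" using s by simp
    qed
    ultimately show "p \<in> mset ` {xs. set xs \<subseteq> {..n} \<and> length xs \<le> n}"
      using xs by auto
  qed
  moreover have "finite {xs. set xs \<subseteq> {..n} \<and> length xs \<le> n}"
    by (rule finite_lists_length_le) simp
  ultimately show ?thesis by (meson finite_surj)
qed

theorem proposition1:
  fixes n :: nat
  assumes "n \<ge> 3"
  shows "gamma n \<ge> gamma (n - 2)"
proof -
  have "card (gsnu_partitions (n-2)) \<le> card (gsnu_partitions n)"
  proof (rule card_inj_on_le[where f = "\<lambda>p. p + {#2#}"])
    show "inj_on (\<lambda>p. p + {#2#}) (gsnu_partitions (n - 2))" by (auto simp: inj_on_def)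
    show "finite (gsnu_partitions n)" by (rule finite_gsnu)
    show "(\<lambda>p. p + {#2#}) ` gsnu_partitions (n - 2) \<subseteq> gsnu_partitions n"
    proof
      fix q assume "q \<in> (\<lambda>p. p + {#2#}) ` gsnu_partitions (n - 2)"
      then obtain p where q: "q = p + {#2#}" and p: "p \<in> gsnu_partitions (n - 2)" by auto
      from p have pos: "\<forall>x\<in>#p. 0 < x" and s: "sum_mset p = n - 2" and n1: "1 \<notin># p"
        and ne: "p \<noteq> {#}" and c: "count p (Max (set_mset p)) \<ge> 2"
        by (auto simp: gsnu_partitions_def is_partition_def)
      define m where "m = Max (set_mset p)"
      have fin: "finite (set_mset p)" by simp
      have mem: "m \<in># p" using ne m_def by (simp add: Max_in)
      have "m \<noteq> 0" using pos mem by auto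
      moreover have "m \<noteq> 1" using n1 mem by auto
      ultimately have m2: "m \<ge> 2" by simp
      have "set_mset q = insert 2 (set_mset p)" using q by auto
      then have "Max (set_mset q) = max 2 m" using ne m_def by (simp add: Max_insert)
      then have mq: "Max (set_mset q) = m" using m2 by simp
      have "count q m \<ge> 2" using c q m_def mem by (cases "m = 2") auto
      then show "q \<in> gsnu_partitions n"
        using q pos s n1 mq assms by (auto simp: gsnu_partitions_def is_partition_def)
    qed
  qed
  then show ?thesis by (simp add: gamma_def)
qed

end
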